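(* Let $n\ge2$, let $Z=(z_1,z_2,\dots)\in{\mathbb{B}}_n^\infty$, let $0\ne A\in{\mathfrak{A}}_n$ and let $\varepsilon_i>0$ for $i\ge1$. Then there exist a word $w\in\mathbb{F}_n^+$ of length $k\ge2$ and $Z' = (z'_1,\dots,z'_{k+1})\in{\mathbb{B}}_n^{k+1}$, whose coordinates $\{z'_{ij}:1\le i\le k+1,\ 1\le j\le n\}$ are all distinct and which satisfies $\|z'_i - z_i\|<\varepsilon_i$ for $1\le i\le k+1$, such that $\rho_{Z',w}(A)\ne0$.
   Context: ${\mathfrak{A}}_n$ is the non-commutative disc algebra generated by the left creation operators $S_1,\dots,S_n$ on full Fock space. For a word $w=l_1\cdots l_k\in\mathbb{F}_n^+$ of length $k\ge2$ and points $z'_1,\dots,z'_{k+1}\in\delta{\mathbb{B}}_n$ for some $0\le\delta<1$ (writing $z'_i=(z'_{i1},\dots,z'_{in})$), $\rho_{Z',w}$ denotes the completely contractive representation (of ${\mathfrak{A}}_n$, and of any semicrossed product ${\mathfrak{A}}_n\times_\phi{\mathbb{Z}}^+$ by sending the generator $U$ to $0$) into $(k+1)\times(k+1)$ upper triangular matrices given by $\rho_{Z',w}(S_j) = \operatorname{diag}(z'_{ij})_{i=1}^{k+1} + (1-\delta)\sum_{i:\,l_i=j}E_{i,i+1}$, $1\le j\le n$, where $E_{i,i+1}$ are matrix units. *)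

theory Defs
  imports "HOL-Analysis.Analysis"
begin

text \<open>Full Fock space over n letters: letters are elements of a finite type 'n with
  CARD('n) = n; words are lists; vectors are square-summable functions on words.\<close>

definition fock_vec :: "('n list \<Rightarrow> complex) \<Rightarrow> bool" where
  "fock_vec f \<longleftrightarrow> (\<lambda>w. (cmod (f w))^2) summable_on UNIV"

definition fnorm :: "('n list \<Rightarrow> complex) \<Rightarrow> real" where
  "fnorm f = sqrt (infsum (\<lambda>w. (cmod (f w))^2) UNIV)"

text \<open>Non-commutative polynomials: finitely supported coefficient functions on words.\<close>
definition ncpoly :: "('n list \<Rightarrow> complex) \<Rightarrow> bool" where
  "ncpoly c \<longleftrightarrow> finite {v. c v \<noteq> 0}"

text \<open>Action of the polynomial sum_v c_v S_v on Fock space, where S_v is the product of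
  left creation operators (S_v xi_u = xi_(v u)).\<close>
definition polyop :: "('n list \<Rightarrow> complex) \<Rightarrow> ('n list \<Rightarrow> complex) \<Rightarrow> ('n list \<Rightarrow> complex)" where
  "polyop c f = (\<lambda>w. \<Sum>i\<le>length w. c (take i w) * f (drop i w))"

definition creation :: "'n \<Rightarrow> ('n list \<Rightarrow> complex) \<Rightarrow> ('n list \<Rightarrow> complex)" where
  "creation j f = (\<lambda>w. case w of [] \<Rightarrow> 0 | l # u \<Rightarrow> (if l = j then f u else 0))"

definition disc_alg :: "(('n list \<Rightarrow> complex) \<Rightarrow> ('n list \<Rightarrow> complex)) \<Rightarrow> bool" where
  "disc_alg A \<longleftrightarrow> (\<forall>f. fock_vec f \<longrightarrow> fock_vec (A f)) \<and>
     (\<forall>\<epsilon>>0. \<exists>c. ncpoly c \<and>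
        (\<forall>f. fock_vec f \<longrightarrow> fnorm (A f - polyop c f) \<le> \<epsilon> * fnorm f))"

definition approx_seq ::
  "(('n list \<Rightarrow> complex) \<Rightarrow> ('n list \<Rightarrow> complex)) \<Rightarrow> (nat \<Rightarrow> 'n list \<Rightarrow> complex) \<Rightarrow> bool" where
  "approx_seq A cs \<longleftrightarrow> (\<forall>m. ncpoly (cs m)) \<and>
     (\<forall>\<epsilon>>0. \<exists>M. \<forall>m\<ge>M. \<forall>f. fock_vec f \<longrightarrow> fnorm (A f - polyop (cs m) f) \<le> \<epsilon> * fnorm f)"

text \<open>Matrices of size m indexed by 1..m (entries outside are irrelevant / zero).\<close>
definition mmul :: "nat \<Rightarrow> (nat \<Rightarrow> nat \<Rightarrow> complex) \<Rightarrow> (nat \<Rightarrow> nat \<Rightarrow> complex) \<Rightarrow> (nat \<Rightarrow> nat \<Rightarrow> complex)" where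
  "mmul m X Y = (\<lambda>i j. \<Sum>l\<in>{1..m}. X i l * Y l j)"

definition midentity :: "nat \<Rightarrow> (nat \<Rightarrow> nat \<Rightarrow> complex)" where
  "midentity m = (\<lambda>i j. if i = j \<and> 1 \<le> i \<and> i \<le> m then 1 else 0)"

text \<open>rho_{Z',w}(S_j), with w = l_1 ... l_k (l_i = w ! (i-1)), points z'_i = Z' i (i = 1..k+1),
  and parameter delta.\<close>
definition rho_S :: "(nat \<Rightarrow> complex^'n) \<Rightarrow> 'n list \<Rightarrow> real \<Rightarrow> 'n \<Rightarrow> (nat \<Rightarrow> nat \<Rightarrow> complex)" where
  "rho_S Z' w \<delta> j = (\<lambda>i i'.
     (if i = i' \<and> 1 \<le> i \<and> i \<le> length w + 1 then Z' i $ j else 0) +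
     (if i' = i + 1 \<and> 1 \<le> i \<and> i \<le> length w \<and> w ! (i - 1) = j
        then complex_of_real (1 - \<delta>) else 0))"

definition rho_word :: "(nat \<Rightarrow> complex^'n) \<Rightarrow> 'n list \<Rightarrow> real \<Rightarrow> 'n list \<Rightarrow> (nat \<Rightarrow> nat \<Rightarrow> complex)" where
  "rho_word Z' w \<delta> v =
     foldr (\<lambda>j M. mmul (length w + 1) (rho_S Z' w \<delta> j) M) v (midentity (length w + 1))"

definition rho_poly :: "(nat \<Rightarrow> complex^'n) \<Rightarrow> 'n list \<Rightarrow> real \<Rightarrow> ('n list \<Rightarrow> complex) \<Rightarrow> (nat \<Rightarrow> nat \<Rightarrow> complex)" where
  "rho_poly Z' w \<delta> c = (\<lambda>i j. \<Sum>v\<in>{v. c v \<noteq> 0}. c v * rho_word Z' w \<delta> v i j)"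

text \<open>Extension of rho_{Z',w} to the disc algebra by (norm-)continuity.\<close>
definition rho_ext :: "(nat \<Rightarrow> complex^'n) \<Rightarrow> 'n list \<Rightarrow> real \<Rightarrow>
    (('n list \<Rightarrow> complex) \<Rightarrow> ('n list \<Rightarrow> complex)) \<Rightarrow> (nat \<Rightarrow> nat \<Rightarrow> complex)" where
  "rho_ext Z' w \<delta> A = (\<lambda>i j. lim (\<lambda>m. rho_poly Z' w \<delta> ((SOME cs. approx_seq A cs) m) i j))"

end

theory Submission
  imports Defs "HOL-Complex_Analysis.Complex_Analysis"
begin

definition Mg :: "(nat \<Rightarrow> complex^'n) \<Rightarrow> 'n list \<Rightarrow> complex \<Rightarrow> complex \<Rightarrow> 'n \<Rightarrow> nat \<Rightarrow> nat \<Rightarrow> complex" where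
  "Mg Y w a b j = (\<lambda>p q. (if p = q \<and> 1 \<le> p \<and> p \<le> length w + 1 then a * Y p $ j else 0) +
     (if q = p + 1 \<and> 1 \<le> p \<and> p \<le> length w \<and> w ! (p - 1) = j then b else 0))"

definition Wg :: "(nat \<Rightarrow> complex^'n) \<Rightarrow> 'n list \<Rightarrow> complex \<Rightarrow> complex \<Rightarrow> 'n list \<Rightarrow> nat \<Rightarrow> nat \<Rightarrow> complex" where
  "Wg Y w a b v = foldr (\<lambda>j M. mmul (length w + 1) (Mg Y w a b j) M) v (midentity (length w + 1))"

lemma Wg_Nil: "Wg Y w a b [] = midentity (length w + 1)"
  by (simp add: Wg_def)

lemma Wg_Cons: "Wg Y w a b (j # v) = mmul (length w + 1) (Mg Y w a b j) (Wg Y w a b v)"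
  by (simp add: Wg_def)

lemma Mg_nz: "Mg Y w a b j p l \<noteq> 0 \<Longrightarrow> l = p \<or> l = p + 1"
  by (auto simp: Mg_def split: if_splits)

lemma Wg_band: "q > p + length v \<Longrightarrow> Wg Y w a b v p q = 0"
proof (induction v arbitrary: p)
  case Nil
  then show ?case by (simp add: Wg_Nil midentity_def)
next
  case (Cons j v)
  have "Mg Y w a b j p l * Wg Y w a b v l q = 0" for l
  proof (cases "Mg Y w a b j p l = 0")
    case False
    then have "l = p \<or> l = p + 1" by (rule Mg_nz)
    then have "q > l + length v" using Cons.prems by auto
    then show ?thesis using Cons.IH by simp
  qed simp
  then show ?case unfolding Wg_Cons mmul_def by (intro sum.neutral) auto
qed

lemma Wg_exact:
  assumes "1 \<le> p" "p + length v \<le> length w + 1"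
  shows "Wg Y w a b v p (p + length v) = b ^ length v * (if v = take (length v) (drop (p - 1) w) then 1 else 0)"
  using assms
proof (induction v arbitrary: p)
  case Nil
  then show ?case by (simp add: Wg_Nil midentity_def)
next
  case (Cons j v)
  let ?K = "length w + 1"
  let ?f = "\<lambda>l. Mg Y w a b j p l * Wg Y w a b v l (p + length (j # v))"
  have pin: "p + 1 \<in> {1..?K}" using Cons.prems by auto
  have z: "\<forall>l\<in>{1..?K} - {p + 1}. ?f l = 0"
  proof
    fix l assume l: "l \<in> {1..?K} - {p + 1}"
    show "?f l = 0"
    proof (cases "l = p")
      case True
      then show ?thesis using Wg_band[where p=l and v=v and q="p + length (j # v)"] by simp
    next
      case False
      then have "Mg Y w a b j p l = 0" using l Mg_nz by blast
      then show ?thesis by simp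
    qed
  qed
  have "Wg Y w a b (j # v) p (p + length (j # v)) = ?f (p + 1)"
  proof -
    have "(\<Sum>l\<in>{1..?K} - {p + 1}. ?f l) = 0" using z by (intro sum.neutral) blast
    moreover have "(\<Sum>l\<in>{1..?K}. ?f l) = ?f (p + 1) + (\<Sum>l\<in>{1..?K} - {p + 1}. ?f l)"
      by (rule sum.remove[OF _ pin]) simp
    moreover have "Wg Y w a b (j # v) p (p + length (j # v)) = (\<Sum>l\<in>{1..?K}. ?f l)"
      unfolding Wg_Cons mmul_def by (rule refl)
    ultimately show ?thesis by simp
  qed
  also have "Mg Y w a b j p (p + 1) = (if w ! (p - 1) = j then b else 0)"
    using Cons.prems by (simp add: Mg_def)
  also have "Wg Y w a b v (p + 1) (p + length (j # v)) = b ^ length v * (if v = take (length v) (drop p w) then 1 else 0)"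
    using Cons.IH[of "p + 1"] Cons.prems by simp
  also have "drop (p - 1) w = w ! (p - 1) # drop p w"
  proof -
    have pl: "p - 1 < length w" using Cons.prems by simp
    have "Suc (p - 1) = p" using Cons.prems by simp
    then show ?thesis using Cons_nth_drop_Suc[OF pl] by simp
  qed
  ultimately show ?case by auto
qed

lemma Wg_scale: "s ^ q * Wg Y w a b v p q = s ^ p * Wg Y w a (s * b) v p q"
proof (induction v arbitrary: p q)
  case Nil
  then show ?case by (simp add: Wg_Nil midentity_def)
next
  case (Cons j v)
  have m: "Mg Y w a b j p l * s ^ l = s ^ p * Mg Y w a (s * b) j p l" for l
    by (auto simp: Mg_def)
  have "s ^ q * Wg Y w a b (j # v) p q = (\<Sum>l\<in>{1..length w + 1}. Mg Y w a b j p l * (s ^ q * Wg Y w a b v l q))"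
    unfolding Wg_Cons mmul_def sum_distrib_left by (rule sum.cong) (auto simp: mult_ac)
  also have "\<dots> = (\<Sum>l\<in>{1..length w + 1}. (Mg Y w a b j p l * s ^ l) * Wg Y w a (s * b) v l q)"
    using Cons.IH by (intro sum.cong) (auto simp: mult.assoc)
  also have "\<dots> = s ^ p * Wg Y w a (s * b) (j # v) p q"
    unfolding m Wg_Cons mmul_def sum_distrib_left by (rule sum.cong) (auto simp: mult_ac)
  finally show ?case .
qed

lemma Wg_homog: "Wg Y w (c * a) (c * b) v p q = c ^ length v * Wg Y w a b v p q"
proof (induction v arbitrary: p q)
  case Nil
  then show ?case by (simp add: Wg_Nil)
next
  case (Cons j v)
  have m: "Mg Y w (c * a) (c * b) j p l = c * Mg Y w a b j p l" for l
    by (auto simp: Mg_def)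
  show ?case
    unfolding Wg_Cons mmul_def m Cons.IH sum_distrib_left by (rule sum.cong) (auto simp: mult_ac)
qed

definition rowv :: "nat \<Rightarrow> (nat \<Rightarrow> complex) \<Rightarrow> (nat \<Rightarrow> nat \<Rightarrow> complex) \<Rightarrow> nat \<Rightarrow> complex" where
  "rowv K y M = (\<lambda>q. \<Sum>p\<in>{1..K}. y p * M p q)"

definition nrm :: "nat \<Rightarrow> (nat \<Rightarrow> complex) \<Rightarrow> real" where
  "nrm K y = (\<Sum>p\<in>{1..K}. (cmod (y p))^2)"

lemma nrm_nonneg: "nrm K y \<ge> 0"
  unfolding nrm_def by (intro sum_nonneg) auto

lemma rowv_mmul: "rowv K y (mmul K X Z) = rowv K (rowv K y X) Z"
proof
  fix q
  have "rowv K y (mmul K X Z) q = (\<Sum>p\<in>{1..K}. \<Sum>l\<in>{1..K}. y p * X p l * Z l q)"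
    unfolding rowv_def mmul_def sum_distrib_left by (simp add: mult_ac)
  also have "\<dots> = (\<Sum>l\<in>{1..K}. \<Sum>p\<in>{1..K}. y p * X p l * Z l q)"
    by (rule sum.swap)
  also have "\<dots> = rowv K (rowv K y X) Z q"
    unfolding rowv_def sum_distrib_right by simp
  finally show "rowv K y (mmul K X Z) q = rowv K (rowv K y X) Z q" .
qed

lemma rowv_id: "nrm K (rowv K y (midentity K)) = nrm K y"
proof -
  have "rowv K y (midentity K) q = y q" if "q \<in> {1..K}" for q
  proof -
    have "rowv K y (midentity K) q = (\<Sum>p\<in>{1..K}. if p = q then y q else 0)"
      unfolding rowv_def midentity_def using that by (intro sum.cong) auto
    also have "\<dots> = y q" using that by simp
    finally show ?thesis .
  qed
  then show ?thesis unfolding nrm_def by (intro sum.cong) auto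
qed

lemma words_Suc:
  "(\<Sum>v\<in>{v::'a::finite list. length v = Suc m}. f v) = (\<Sum>j\<in>UNIV. \<Sum>v\<in>{v. length v = m}. f (j # v))"
proof -
  have e: "{v::'a list. length v = Suc m} = (\<lambda>(j, v). j # v) ` (UNIV \<times> {v. length v = m})"
    by (auto simp: length_Suc_conv image_iff)
  have i: "inj_on (\<lambda>(j, v). j # v) (UNIV \<times> {v::'a list. length v = m})"
    by (auto simp: inj_on_def)
  have fin: "finite {v::'a list. length v = m}"
    using finite_lists_length_eq[of "UNIV :: 'a set" m] by simp
  show ?thesis
    unfolding e sum.reindex[OF i] sum.cartesian_product by (intro sum.cong) (auto split: prod.splits)
qed

lemma finite_words: "finite {v::'a::finite list. length v = m}"
  using finite_lists_length_eq[of "UNIV :: 'a set" m] by simp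

lemma words_bound:
  fixes M :: "'n::finite \<Rightarrow> nat \<Rightarrow> nat \<Rightarrow> complex"
  assumes row: "\<And>y. (\<Sum>j\<in>UNIV. nrm K (rowv K y (M j))) \<le> \<rho>^2 * nrm K y" and "\<rho> \<ge> 0"
  shows "(\<Sum>v\<in>{v::'n list. length v = m}. nrm K (rowv K y (foldr (\<lambda>j X. mmul K (M j) X) v (midentity K))))
          \<le> \<rho>^(2*m) * nrm K y"
proof (induction m arbitrary: y)
  case 0
  have "{v::'n list. length v = 0} = {[]}" by auto
  then show ?case by (simp add: rowv_id)
next
  case (Suc m)
  let ?W = "\<lambda>v. foldr (\<lambda>j X. mmul K (M j) X) v (midentity K)"
  have "(\<Sum>v\<in>{v::'n list. length v = Suc m}. nrm K (rowv K y (?W v)))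
      = (\<Sum>j\<in>UNIV. \<Sum>v\<in>{v. length v = m}. nrm K (rowv K (rowv K y (M j)) (?W v)))"
    unfolding words_Suc by (simp add: rowv_mmul)
  also have "\<dots> \<le> (\<Sum>j\<in>UNIV. \<rho>^(2*m) * nrm K (rowv K y (M j)))"
    by (intro sum_mono Suc.IH)
  also have "\<dots> = \<rho>^(2*m) * (\<Sum>j\<in>UNIV. nrm K (rowv K y (M j)))"
    by (simp add: sum_distrib_left)
  also have "\<dots> \<le> \<rho>^(2*m) * (\<rho>^2 * nrm K y)"
    using row assms(2) by (intro mult_left_mono) auto
  also have "\<rho>^(2*m) * (\<rho>^2 * nrm K y) = \<rho>^(2 * Suc m) * nrm K y"
    by (simp add: power_add power2_eq_square mult_ac)
  finally show ?case .
qed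

lemma norm_vec_sq: "(norm (x::complex^'n))^2 = (\<Sum>j\<in>UNIV. (cmod (x$j))^2)"
  by (simp add: norm_vec_def L2_set_def sum_nonneg)

lemma rowv_Mg:
  assumes "q \<in> {1..length w + 1}"
  shows "rowv (length w + 1) y (Mg Y w 1 b j) q =
    y q * Y q $ j + b * (if 2 \<le> q \<and> w ! (q - 2) = j then y (q - 1) else 0)"
proof -
  let ?K = "length w + 1"
  have "rowv ?K y (Mg Y w 1 b j) q =
      (\<Sum>p\<in>{1..?K}. if p = q then y q * Y q $ j else 0) +
      (\<Sum>p\<in>{1..?K}. if p = q - 1 then b * (if 2 \<le> q \<and> w ! (q - 2) = j then y (q - 1) else 0) else 0)"
    unfolding rowv_def sum.distrib[symmetric]
  proof (rule sum.cong[OF refl])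
    fix p assume p: "p \<in> {1..?K}"
    show "y p * Mg Y w 1 b j p q = (if p = q then y q * Y q $ j else 0) +
       (if p = q - 1 then b * (if 2 \<le> q \<and> w ! (q - 2) = j then y (q - 1) else 0) else 0)"
    proof (cases "p = q")
      case True
      have "q \<noteq> q - 1" using assms by auto
      then show ?thesis using p assms unfolding True by (simp add: Mg_def)
    next
      case False
      show ?thesis
      proof (cases "p = q - 1")
        case True
        then have q: "q = p + 1" using p False by auto
        have "p \<le> length w" using q assms by simp
        then show ?thesis unfolding q using p by (auto simp: Mg_def algebra_simps)
      next
        case F2: False
        then have "q \<noteq> p + 1" by auto
        then show ?thesis using False F2 by (auto simp: Mg_def)
      qed
    qed
  qed
  also have "\<dots> = y q * Y q $ j + b * (if 2 \<le> q \<and> w ! (q - 2) = j then y (q - 1) else 0)"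
    using assms by (cases "2 \<le> q") auto
  finally show ?thesis .
qed

lemma sq_ineq:
  fixes A C :: complex
  assumes "\<mu> > 0" "b \<ge> 0"
  shows "(cmod (A + of_real b * C))^2 \<le> (1 + b/\<mu>) * (cmod A)^2 + b*(b+\<mu>) * (cmod C)^2"
proof -
  have t: "cmod (A + of_real b * C) \<le> cmod A + b * cmod C"
    using norm_triangle_ineq[of A "of_real b * C"] assms by (simp add: norm_mult)
  have "(cmod (A + of_real b * C))^2 \<le> (cmod A + b * cmod C)^2"
    using t by (intro power_mono) auto
  also have "\<dots> \<le> (1 + b/\<mu>) * (cmod A)^2 + b*(b+\<mu>) * (cmod C)^2"
  proof -
    let ?x = "cmod A" and ?c = "cmod C"
    have "0 \<le> (?x - \<mu> * ?c)^2" by simp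
    then have "2 * ?x * ?c * \<mu> \<le> ?x^2 + \<mu>^2 * ?c^2" by (simp add: power2_eq_square algebra_simps)
    then have "2 * ?x * ?c \<le> ?x^2 / \<mu> + \<mu> * ?c^2"
      using assms by (simp add: field_simps power2_eq_square)
    then have "b * (2 * ?x * ?c) \<le> b * (?x^2 / \<mu> + \<mu> * ?c^2)"
      using assms by (intro mult_left_mono) auto
    then show ?thesis by (simp add: power2_eq_square algebra_simps add_divide_distrib)
  qed
  finally show ?thesis .
qed

lemma shift_sum_eq:
  "(\<Sum>q\<in>{1..Suc K}. if 2 \<le> q then f (q - 1) else (0::real)) = (\<Sum>q\<in>{1..K}. f q)"
proof (induction K)
  case 0
  then show ?case by simp
next
  case (Suc K)
  have "(\<Sum>q\<in>{1..Suc (Suc K)}. if 2 \<le> q then f (q - 1) else (0::real)) =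
       (\<Sum>q\<in>{1..Suc K}. if 2 \<le> q then f (q - 1) else 0) + f (Suc K)"
    by simp
  then show ?case using Suc.IH by simp
qed

lemma shift_sum_le:
  assumes "\<And>q. f q \<ge> (0::real)"
  shows "(\<Sum>q\<in>{1..K::nat}. if 2 \<le> q then f (q - 1) else 0) \<le> (\<Sum>q\<in>{1..K}. f q)"
proof (cases K)
  case 0
  then show ?thesis by simp
next
  case (Suc K')
  then show ?thesis using shift_sum_eq[where K=K' and f=f] assms by (simp add: sum_nonneg)
qed

lemma Mg_row:
  assumes b: "b \<ge> 0" and mu: "\<mu> > 0" and Y: "\<forall>p\<in>{1..length w + 1}. norm (Y p) \<le> \<mu>"
  shows "(\<Sum>j\<in>UNIV. nrm (length w + 1) (rowv (length w + 1) y (Mg Y w 1 (of_real b) j)))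
         \<le> (\<mu> + b)^2 * nrm (length w + 1) y"
proof -
  let ?K = "length w + 1"
  define A where "A j q = y q * Y q $ j" for j q
  define C where "C j q = (if 2 \<le> q \<and> w ! (q - 2) = j then y (q - 1) else 0)" for j q
  have "(\<Sum>j\<in>UNIV. nrm ?K (rowv ?K y (Mg Y w 1 (of_real b) j)))
      = (\<Sum>j\<in>UNIV. \<Sum>q\<in>{1..?K}. (cmod (A j q + of_real b * C j q))^2)"
    unfolding nrm_def A_def C_def
  proof (intro sum.cong refl)
    fix j q assume "q \<in> {1..?K}"
    then show "(cmod (rowv ?K y (Mg Y w 1 (of_real b) j) q))^2 =
      (cmod (y q * Y q $ j + of_real b * (if 2 \<le> q \<and> w ! (q - 2) = j then y (q - 1) else 0)))^2"
      using rowv_Mg[of q w y Y "of_real b" j] by simp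
  qed
  also have "\<dots> \<le> (\<Sum>j\<in>UNIV. \<Sum>q\<in>{1..?K}. (1 + b/\<mu>) * (cmod (A j q))^2 + b*(b+\<mu>) * (cmod (C j q))^2)"
    by (intro sum_mono sq_ineq mu b)
  also have "\<dots> = (1 + b/\<mu>) * (\<Sum>q\<in>{1..?K}. \<Sum>j\<in>UNIV. (cmod (A j q))^2)
                 + b*(b+\<mu>) * (\<Sum>q\<in>{1..?K}. \<Sum>j\<in>UNIV. (cmod (C j q))^2)"
    by (subst sum.swap) (simp only: sum.distrib sum_distrib_left)
  also have "\<dots> \<le> (1 + b/\<mu>) * (\<mu>^2 * nrm ?K y) + b*(b+\<mu>) * nrm ?K y"
  proof (intro add_mono mult_left_mono)
    have "(\<Sum>j\<in>UNIV. (cmod (A j q))^2) \<le> \<mu>^2 * (cmod (y q))^2" if q: "q \<in> {1..?K}" for q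
    proof -
      have "(\<Sum>j\<in>UNIV. (cmod (A j q))^2) = (cmod (y q))^2 * (norm (Y q))^2"
        unfolding A_def norm_vec_sq by (simp add: norm_mult power_mult_distrib sum_distrib_left)
      also have "\<dots> \<le> (cmod (y q))^2 * \<mu>^2"
        using Y q by (intro mult_left_mono power_mono) auto
      finally show ?thesis by (simp add: mult_ac)
    qed
    then have "(\<Sum>q\<in>{1..?K}. \<Sum>j\<in>UNIV. (cmod (A j q))^2) \<le> (\<Sum>q\<in>{1..?K}. \<mu>^2 * (cmod (y q))^2)"
      by (intro sum_mono) auto
    then show "(\<Sum>q\<in>{1..?K}. \<Sum>j\<in>UNIV. (cmod (A j q))^2) \<le> \<mu>^2 * nrm ?K y"
      by (simp only: nrm_def sum_distrib_left)
    have "(\<Sum>j\<in>UNIV. (cmod (C j q))^2) = (if 2 \<le> q then (cmod (y (q - 1)))^2 else 0)" for q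
    proof (cases "2 \<le> q")
      case True
      have "(\<Sum>j\<in>UNIV. (cmod (C j q))^2) = (\<Sum>j\<in>UNIV. if j = w ! (q - 2) then (cmod (y (q - 1)))^2 else 0)"
        unfolding C_def using True by (intro sum.cong) auto
      then show ?thesis using True by simp
    qed (simp add: C_def)
    then show "(\<Sum>q\<in>{1..?K}. \<Sum>j\<in>UNIV. (cmod (C j q))^2) \<le> nrm ?K y"
      unfolding nrm_def using shift_sum_le[of "\<lambda>q. (cmod (y q))^2" ?K] by simp
  qed (use mu b in auto)
  also have "\<dots> = (\<mu> + b)^2 * nrm ?K y"
    using mu by (simp add: field_simps power2_eq_square)
  finally show ?thesis .
qed

definition Sm :: "('n list \<Rightarrow> complex) \<Rightarrow> ('n list \<Rightarrow> complex) \<Rightarrow> nat \<Rightarrow> complex" where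
  "Sm e x m = (\<Sum>v\<in>{v. length v = m}. x v * e v)"

definition Lfun :: "('n list \<Rightarrow> complex) \<Rightarrow> ('n list \<Rightarrow> complex) \<Rightarrow> complex" where
  "Lfun e x = suminf (Sm e x)"

lemma fnorm_nonneg: "fnorm x \<ge> 0"
  unfolding fnorm_def by (intro real_sqrt_ge_zero infsum_nonneg) auto

lemma fnorm_sq: "(fnorm x)^2 = infsum (\<lambda>w. (cmod (x w))^2) UNIV"
  unfolding fnorm_def by (simp add: infsum_nonneg)

lemma fock_sum_le:
  assumes "fock_vec x" "finite S"
  shows "(\<Sum>v\<in>S. (cmod (x v))^2) \<le> (fnorm x)^2"
  unfolding fnorm_sq using assms unfolding fock_vec_def
  by (intro finite_sum_le_infsum) auto

lemma fock_pt:
  assumes "fock_vec x"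
  shows "cmod (x v) \<le> fnorm x"
proof -
  have "(cmod (x v))^2 \<le> (fnorm x)^2" using fock_sum_le[OF assms, of "{v}"] by simp
  then show ?thesis using fnorm_nonneg[of x] by (simp add: power_mono_iff abs_le_square_iff)
qed

lemma fock_vec_diff:
  assumes "fock_vec x" "fock_vec y"
  shows "fock_vec (\<lambda>v. x v - y v)"
  unfolding fock_vec_def
proof (rule summable_on_comparison_test)
  show "(\<lambda>v. 2 * (cmod (x v))^2 + 2 * (cmod (y v))^2) summable_on UNIV"
    using assms unfolding fock_vec_def by (intro summable_on_add summable_on_cmult_right)
  fix v
  have "cmod (x v - y v) \<le> cmod (x v) + cmod (y v)" by (rule norm_triangle_ineq4)
  then have "(cmod (x v - y v))^2 \<le> (cmod (x v) + cmod (y v))^2" by (intro power_mono) auto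
  also have "\<dots> \<le> 2 * (cmod (x v))^2 + 2 * (cmod (y v))^2"
  proof -
    have "0 \<le> (cmod (x v) - cmod (y v))^2" by simp
    then show ?thesis unfolding power2_sum power2_diff by linarith
  qed
  finally show "(cmod (x v - y v))^2 \<le> 2 * (cmod (x v))^2 + 2 * (cmod (y v))^2" .
qed simp

lemma fock_vec_add:
  assumes "fock_vec x" "fock_vec y"
  shows "fock_vec (\<lambda>v. x v + y v)"
proof -
  have "fock_vec (\<lambda>v. - y v)" using assms(2) unfolding fock_vec_def by simp
  from fock_vec_diff[OF assms(1) this] show ?thesis by simp
qed

lemma fock_vec_cmult:
  assumes "fock_vec x"
  shows "fock_vec (\<lambda>v. a * x v)"
  using summable_on_cmult_right[OF assms[unfolded fock_vec_def], of "(cmod a)^2"]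
  unfolding fock_vec_def by (simp add: norm_mult power_mult_distrib)

lemma ncpoly_fock:
  assumes "ncpoly c"
  shows "fock_vec c"
  unfolding fock_vec_def
proof -
  have "(\<lambda>w. (cmod (c w))^2) summable_on {v. c v \<noteq> 0}"
    using assms unfolding ncpoly_def by simp
  then show "(\<lambda>w. (cmod (c w))^2) summable_on UNIV"
  proof -
    have "((\<lambda>w. (cmod (c w))^2) summable_on {v. c v \<noteq> 0}) = ((\<lambda>w. (cmod (c w))^2) summable_on UNIV)"
      by (rule summable_on_cong_neutral) auto
    then show ?thesis using \<open>(\<lambda>w. (cmod (c w))^2) summable_on {v. c v \<noteq> 0}\<close> by simp
  qed
qed

lemma Sm_bound:
  fixes x e :: "'n::finite list \<Rightarrow> complex"
  assumes x: "fock_vec x" and e: "\<And>m. (\<Sum>v\<in>{v. length v = m}. (cmod (e v))^2) \<le> \<rho>^(2*m)"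
    and r: "\<rho> \<ge> 0"
  shows "norm (Sm e x m) \<le> fnorm x * \<rho>^m"
proof -
  let ?S = "{v::'n list. length v = m}"
  have "norm (Sm e x m) \<le> (\<Sum>v\<in>?S. \<bar>cmod (x v)\<bar> * \<bar>cmod (e v)\<bar>)"
    unfolding Sm_def by (rule order_trans[OF norm_sum]) (simp add: norm_mult)
  also have "\<dots> \<le> L2_set (\<lambda>v. cmod (x v)) ?S * L2_set (\<lambda>v. cmod (e v)) ?S"
    by (rule L2_set_mult_ineq)
  also have "\<dots> \<le> fnorm x * \<rho>^m"
  proof (intro mult_mono)
    have "L2_set (\<lambda>v. cmod (x v)) ?S \<le> sqrt ((fnorm x)^2)"
      unfolding L2_set_def using fock_sum_le[OF x, of ?S] finite_words[where 'a='n]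
      by (intro real_sqrt_le_mono) simp
    then show "L2_set (\<lambda>v. cmod (x v)) ?S \<le> fnorm x" using fnorm_nonneg[of x] by simp
    have "L2_set (\<lambda>v. cmod (e v)) ?S \<le> sqrt (\<rho>^(2*m))"
      unfolding L2_set_def using e[of m] by (intro real_sqrt_le_mono) simp
    also have "sqrt (\<rho>^(2*m)) = \<rho>^m"
    proof -
      have "\<rho>^(2*m) = (\<rho>^m)^2" by (simp add: power_mult[symmetric] mult.commute)
      then show ?thesis using r by simp
    qed
    finally show "L2_set (\<lambda>v. cmod (e v)) ?S \<le> \<rho>^m" .
  qed (use r fnorm_nonneg in auto)
  finally show ?thesis .
qed

lemma Sm_summable:
  fixes x e :: "'n::finite list \<Rightarrow> complex"
  assumes x: "fock_vec x" and e: "\<And>m. (\<Sum>v\<in>{v. length v = m}. (cmod (e v))^2) \<le> \<rho>^(2*m)"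
    and r: "0 \<le> \<rho>" "\<rho> < 1"
  shows "summable (Sm e x)" "summable (\<lambda>m. norm (Sm e x m))"
    "norm (Lfun e x) \<le> fnorm x / (1 - \<rho>)"
proof -
  have g: "summable (\<lambda>m. fnorm x * \<rho>^m)"
    using r by (intro summable_mult summable_geometric) auto
  have b: "\<And>m. norm (Sm e x m) \<le> fnorm x * \<rho>^m"
    by (rule Sm_bound[OF x e r(1)])
  show s1: "summable (Sm e x)"
    by (rule summable_comparison_test'[OF g]) (use b in auto)
  show s2: "summable (\<lambda>m. norm (Sm e x m))"
    by (rule summable_comparison_test'[OF g]) (use b in auto)
  have "norm (Lfun e x) \<le> (\<Sum>m. norm (Sm e x m))"
    unfolding Lfun_def by (rule summable_norm[OF s2])
  also have "\<dots> \<le> (\<Sum>m. fnorm x * \<rho>^m)"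
    by (intro suminf_le s2 g b)
  also have "\<dots> = fnorm x / (1 - \<rho>)"
    using r by (simp add: suminf_mult summable_geometric suminf_geometric)
  finally show "norm (Lfun e x) \<le> fnorm x / (1 - \<rho>)" .
qed

lemma Sm_diff: "Sm e (\<lambda>v. x v - y v) m = Sm e x m - Sm e y m"
  unfolding Sm_def by (simp add: sum_subtractf algebra_simps)

lemma Lfun_diff:
  fixes x y e :: "'n::finite list \<Rightarrow> complex"
  assumes x: "fock_vec x" and y: "fock_vec y"
    and e: "\<And>m. (\<Sum>v\<in>{v. length v = m}. (cmod (e v))^2) \<le> \<rho>^(2*m)"
    and r: "0 \<le> \<rho>" "\<rho> < 1"
  shows "Lfun e (\<lambda>v. x v - y v) = Lfun e x - Lfun e y"
  unfolding Lfun_def Sm_diff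
  by (intro suminf_diff[symmetric] Sm_summable(1)[OF x e r] Sm_summable(1)[OF y e r])

lemma Lfun_poly:
  fixes c e :: "'n::finite list \<Rightarrow> complex"
  assumes "ncpoly c"
  shows "Lfun e c = (\<Sum>v\<in>{v. c v \<noteq> 0}. c v * e v)"
proof -
  let ?S = "{v. c v \<noteq> 0}"
  have fS: "finite ?S" using assms unfolding ncpoly_def .
  have z: "Sm e c m = 0" if "m \<notin> length ` ?S" for m
    unfolding Sm_def using that by (intro sum.neutral) auto
  have "Lfun e c = (\<Sum>m\<in>length ` ?S. Sm e c m)"
    unfolding Lfun_def by (rule suminf_finite) (use fS z in auto)
  also have "\<dots> = (\<Sum>m\<in>length ` ?S. \<Sum>v\<in>{v\<in>?S. length v = m}. c v * e v)"
  proof (rule sum.cong[OF refl])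
    fix m
    show "Sm e c m = (\<Sum>v\<in>{v\<in>?S. length v = m}. c v * e v)"
      unfolding Sm_def using finite_words[where 'a='n and m=m]
      by (intro sum.mono_neutral_right) auto
  qed
  also have "\<dots> = (\<Sum>v\<in>?S. c v * e v)"
    by (rule sum.image_gen[symmetric]) (rule fS)
  finally show ?thesis .
qed

definition e0 :: "'n list \<Rightarrow> complex" where
  "e0 = (\<lambda>v. if v = [] then 1 else 0)"

lemma ncpoly_e0: "ncpoly (e0 :: 'n list \<Rightarrow> complex)"
proof -
  have "{v::'n list. e0 v \<noteq> 0} = {[]}" by (auto simp: e0_def)
  then show ?thesis unfolding ncpoly_def by simp
qed

lemma fock_e0: "fock_vec (e0 :: 'n list \<Rightarrow> complex)"
  by (rule ncpoly_fock[OF ncpoly_e0])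

lemma fnorm_e0: "fnorm (e0 :: 'n list \<Rightarrow> complex) = 1"
proof -
  have "infsum (\<lambda>w::'n list. (cmod (e0 w))^2) UNIV = infsum (\<lambda>w::'n list. (cmod (e0 w))^2) {[]}"
    by (rule infsum_cong_neutral) (auto simp: e0_def)
  then show ?thesis unfolding fnorm_def by (simp add: e0_def)
qed

lemma polyop_e0: "polyop c e0 = c"
proof
  fix w :: "'a list"
  have "polyop c e0 w = (\<Sum>i\<le>length w. if i = length w then c w else 0)"
    unfolding polyop_def e0_def by (intro sum.cong) auto
  then show "polyop c e0 w = c w" by simp
qed

lemma approx_exists:
  fixes A :: "('n list \<Rightarrow> complex) \<Rightarrow> ('n list \<Rightarrow> complex)"
  assumes "disc_alg A"
  shows "\<exists>cs. approx_seq A cs"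
proof -
  have ex: "\<forall>m::nat. \<exists>c. ncpoly c \<and> (\<forall>f::'n list \<Rightarrow> complex. fock_vec f \<longrightarrow> fnorm (A f - polyop c f) \<le> (1 / (real m + 1)) * fnorm f)"
  proof
    fix m :: nat
    have "1 / (real m + 1) > 0" by simp
    then show "\<exists>c. ncpoly c \<and> (\<forall>f::'n list \<Rightarrow> complex. fock_vec f \<longrightarrow> fnorm (A f - polyop c f) \<le> (1 / (real m + 1)) * fnorm f)"
      using assms unfolding disc_alg_def by blast
  qed
  obtain cs where csa: "\<forall>m. ncpoly (cs m) \<and> (\<forall>f::'n list \<Rightarrow> complex. fock_vec f \<longrightarrow> fnorm (A f - polyop (cs m) f) \<le> (1 / (real m + 1)) * fnorm f)"
    using choice[OF ex] by blast
  have cs: "\<And>m. ncpoly (cs m)"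
    "\<And>m f. fock_vec f \<Longrightarrow> fnorm (A f - polyop (cs m) f) \<le> (1 / (real m + 1)) * fnorm f"
    using csa by blast+
  have "approx_seq A cs"
    unfolding approx_seq_def
  proof (intro conjI allI impI)
    fix m show "ncpoly (cs m)" by (rule cs(1))
  next
    fix \<epsilon> :: real assume e: "\<epsilon> > 0"
    obtain M :: nat where M: "1 / \<epsilon> < real M" using reals_Archimedean2 by blast
    have "\<forall>m\<ge>M. \<forall>f. fock_vec f \<longrightarrow> fnorm (A f - polyop (cs m) f) \<le> \<epsilon> * fnorm f"
    proof (intro allI impI)
      fix m and f :: "'n list \<Rightarrow> complex" assume m: "m \<ge> M" and f: "fock_vec f"
      have "1 / (real m + 1) \<le> \<epsilon>"
      proof -
        have "1 / \<epsilon> < real m + 1" using M m by linarith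
        then show ?thesis using e by (simp add: field_simps)
      qed
      then have "(1 / (real m + 1)) * fnorm f \<le> \<epsilon> * fnorm f"
        by (intro mult_right_mono fnorm_nonneg)
      then show "fnorm (A f - polyop (cs m) f) \<le> \<epsilon> * fnorm f" using cs(2)[OF f, of m] by linarith
    qed
    then show "\<exists>M. \<forall>m\<ge>M. \<forall>f. fock_vec f \<longrightarrow> fnorm (A f - polyop (cs m) f) \<le> \<epsilon> * fnorm f" by blast
  qed
  then show ?thesis by blast
qed

lemma approx_F:
  fixes A :: "('n list \<Rightarrow> complex) \<Rightarrow> ('n list \<Rightarrow> complex)"
  assumes "approx_seq A cs" "\<epsilon> > 0"
  shows "\<exists>M. \<forall>k\<ge>M. fnorm (\<lambda>v. A e0 v - cs k v) \<le> \<epsilon>"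
proof -
  have "\<forall>\<epsilon>>0. \<exists>M. \<forall>m\<ge>M. \<forall>f. fock_vec f \<longrightarrow> fnorm (A f - polyop (cs m) f) \<le> \<epsilon> * fnorm f"
    using assms(1) unfolding approx_seq_def by (rule conjunct2)
  then obtain M where M: "\<forall>m\<ge>M. \<forall>f. fock_vec f \<longrightarrow> fnorm (A f - polyop (cs m) f) \<le> \<epsilon> * fnorm f"
    using assms(2) by blast
  have "fnorm (\<lambda>v. A e0 v - cs k v) \<le> \<epsilon>" if "k \<ge> M" for k
  proof -
    have "fnorm (A e0 - polyop (cs k) e0) \<le> \<epsilon> * fnorm (e0::'n list \<Rightarrow> complex)" using M[rule_format, OF that fock_e0] .
    moreover have "A e0 - polyop (cs k) e0 = (\<lambda>v. A e0 v - cs k v)" by (simp add: polyop_e0 fun_diff_def)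
    ultimately show ?thesis by (simp add: fnorm_e0)
  qed
  then show ?thesis by blast
qed

lemma Lfun_limit:
  fixes e :: "'n::finite list \<Rightarrow> complex"
  assumes e: "\<And>m. (\<Sum>v\<in>{v. length v = m}. (cmod (e v))^2) \<le> \<rho>^(2*m)"
    and r: "0 \<le> \<rho>" "\<rho> < 1"
    and A: "disc_alg A" and cs: "approx_seq A cs"
  shows "(\<lambda>k. \<Sum>v\<in>{v. cs k v \<noteq> 0}. cs k v * e v) \<longlonglongrightarrow> Lfun e (A e0)"
proof (rule LIMSEQ_I)
  fix r0 :: real assume r0: "r0 > 0"
  have F: "fock_vec (A e0)" using A fock_e0 unfolding disc_alg_def by blast
  have ck: "fock_vec (cs k)" for k
    using cs unfolding approx_seq_def by (auto intro: ncpoly_fock)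
  obtain M where M: "\<forall>k\<ge>M. fnorm (\<lambda>v. A e0 v - cs k v) \<le> r0 * (1 - \<rho>) / 2"
    using approx_F[OF cs, of "r0 * (1 - \<rho>) / 2"] r0 r by auto
  have "norm ((\<Sum>v\<in>{v. cs k v \<noteq> 0}. cs k v * e v) - Lfun e (A e0)) < r0" if k: "k \<ge> M" for k
  proof -
    have "(\<Sum>v\<in>{v. cs k v \<noteq> 0}. cs k v * e v) = Lfun e (cs k)"
      using cs unfolding approx_seq_def by (simp add: Lfun_poly)
    then have "norm ((\<Sum>v\<in>{v. cs k v \<noteq> 0}. cs k v * e v) - Lfun e (A e0))
        = norm (Lfun e (\<lambda>v. A e0 v - cs k v))"
      using Lfun_diff[OF F ck e r] by (simp add: norm_minus_commute)
    also have "\<dots> \<le> fnorm (\<lambda>v. A e0 v - cs k v) / (1 - \<rho>)"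
      by (rule Sm_summable(3)[OF fock_vec_diff[OF F ck] e r])
    also have "\<dots> \<le> (r0 * (1 - \<rho>) / 2) / (1 - \<rho>)"
      using M k r by (intro divide_right_mono) auto
    also have "\<dots> = r0 / 2" using r by (simp add: field_simps)
    also have "\<dots> < r0" using r0 by simp
    finally show ?thesis .
  qed
  then show "\<exists>no. \<forall>n\<ge>no. norm ((\<Sum>v\<in>{v. cs n v \<noteq> 0}. cs n v * e v) - Lfun e (A e0)) < r0"
    by blast
qed

lemma polyop_add: "polyop (\<lambda>u. c1 u + c2 u) f = (\<lambda>w. polyop c1 f w + polyop c2 f w)"
  unfolding polyop_def by (simp add: sum.distrib distrib_right)

lemma polyop_single:
  "polyop (\<lambda>u. if u = v then a else 0) f = (\<lambda>w. if take (length v) w = v then a * f (drop (length v) w) else 0)"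
proof
  fix w :: "'a list"
  have e: "(if take i w = v then a else 0) * f (drop i w) =
      (if i = length v then (if take (length v) w = v then a * f (drop (length v) w) else 0) else 0)"
    if "i \<in> {..length w}" for i
  proof (cases "take i w = v")
    case True
    then have "length v = i" using that by auto
    then show ?thesis using True by simp
  next
    case False
    then show ?thesis by auto
  qed
  have "polyop (\<lambda>u. if u = v then a else 0) f w =
      (\<Sum>i\<in>{..length w}. if i = length v then (if take (length v) w = v then a * f (drop (length v) w) else 0) else 0)"
    unfolding polyop_def using e by (intro sum.cong) auto
  also have "\<dots> = (if take (length v) w = v then a * f (drop (length v) w) else 0)"
  proof (cases "length v \<le> length w")
    case False
    then have "take (length v) w \<noteq> v" by auto
    then show ?thesis by simp
  qed simp
  finally show "polyop (\<lambda>u. if u = v then a else 0) f w = (if take (length v) w = v then a * f (drop (length v) w) else 0)" .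
qed

lemma fock_shift:
  fixes f :: "'n list \<Rightarrow> complex"
  assumes f: "fock_vec f"
  shows "fock_vec (\<lambda>w. if take (length v) w = v then a * f (drop (length v) w) else 0)"
proof -
  let ?g = "\<lambda>w. (cmod (if take (length v) w = v then a * f (drop (length v) w) else 0))^2"
  have i: "inj (\<lambda>u. v @ u)" by (auto simp: inj_def)
  have "(?g \<circ> (\<lambda>u. v @ u)) = (\<lambda>u. (cmod a)^2 * (cmod (f u))^2)"
    by (auto simp: norm_mult power_mult_distrib)
  then have "(?g \<circ> (\<lambda>u. v @ u)) summable_on UNIV"
    using summable_on_cmult_right[OF f[unfolded fock_vec_def]] by simp
  then have s: "?g summable_on range (\<lambda>u. v @ u)"
    using summable_on_reindex[OF i] by blast
  have "(?g summable_on range (\<lambda>u. v @ u)) = (?g summable_on UNIV)"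
  proof (rule summable_on_cong_neutral)
    fix x assume "x \<in> UNIV - range (\<lambda>u. v @ u)"
    then have "take (length v) x \<noteq> v" by (metis DiffD2 append_take_drop_id rangeI)
    then show "?g x = 0" by simp
  qed auto
  then show ?thesis unfolding fock_vec_def using s by simp
qed

lemma fock_polyop_aux:
  fixes f :: "'n list \<Rightarrow> complex"
  assumes f: "fock_vec f" and S: "finite S"
  shows "\<forall>c. {v. c v \<noteq> 0} \<subseteq> S \<longrightarrow> fock_vec (polyop c f)"
  using S
proof (induction S rule: finite_induct)
  case empty
  show ?case
  proof (intro allI impI)
    fix c :: "'n list \<Rightarrow> complex" assume "{v. c v \<noteq> 0} \<subseteq> {}"
    then have "polyop c f = (\<lambda>w. 0)" unfolding polyop_def by (auto intro!: ext sum.neutral)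
    then show "fock_vec (polyop c f)" unfolding fock_vec_def by simp
  qed
next
  case (insert v S)
  show ?case
  proof (intro allI impI)
    fix c :: "'n list \<Rightarrow> complex" assume c: "{v. c v \<noteq> 0} \<subseteq> insert v S"
    let ?c0 = "c(v := 0)"
    have ce: "c = (\<lambda>u. ?c0 u + (if u = v then c v else 0))" by auto
    have "{u. ?c0 u \<noteq> 0} \<subseteq> S" using c by auto
    then have f0: "fock_vec (polyop ?c0 f)" using insert.IH by blast
    have f1: "fock_vec (polyop (\<lambda>u. if u = v then c v else 0) f)"
      unfolding polyop_single by (rule fock_shift[OF f])
    have "polyop c f = (\<lambda>w. polyop ?c0 f w + polyop (\<lambda>u. if u = v then c v else 0) f w)"
      by (subst ce) (rule polyop_add)
    then show "fock_vec (polyop c f)" using fock_vec_add[OF f0 f1] by simp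
  qed
qed

lemma fock_polyop:
  fixes f :: "'n list \<Rightarrow> complex"
  assumes "fock_vec f" "ncpoly c"
  shows "fock_vec (polyop c f)"
  using fock_polyop_aux[OF assms(1), of "{v. c v \<noteq> 0}"] assms(2) unfolding ncpoly_def by blast

lemma A_formula:
  fixes A :: "('n list \<Rightarrow> complex) \<Rightarrow> ('n list \<Rightarrow> complex)"
  assumes A: "disc_alg A" and cs: "approx_seq A cs" and f: "fock_vec f"
  shows "A f w = (\<Sum>i\<le>length w. A e0 (take i w) * f (drop i w))"
proof -
  have F: "fock_vec (A e0)" using A fock_e0 unfolding disc_alg_def by blast
  have ck: "ncpoly (cs k)" for k using cs unfolding approx_seq_def by blast
  have conv1: "(\<lambda>k. cs k u) \<longlonglongrightarrow> A e0 u" for u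
  proof (rule LIMSEQ_I)
    fix r :: real assume r: "r > 0"
    obtain M where M: "\<forall>k\<ge>M. fnorm (\<lambda>v. A e0 v - cs k v) \<le> r / 2"
      using approx_F[OF cs, of "r/2"] r by auto
    have "norm (cs k u - A e0 u) < r" if "k \<ge> M" for k
    proof -
      have "norm (cs k u - A e0 u) = cmod (A e0 u - cs k u)" by (simp add: norm_minus_commute)
      also have "\<dots> \<le> fnorm (\<lambda>v. A e0 v - cs k v)"
        by (rule fock_pt[OF fock_vec_diff[OF F ncpoly_fock[OF ck]]])
      also have "\<dots> \<le> r / 2" using M that by blast
      finally show ?thesis using r by simp
    qed
    then show "\<exists>no. \<forall>n\<ge>no. norm (cs n u - A e0 u) < r" by blast
  qed
  have conv2: "(\<lambda>k. polyop (cs k) f w) \<longlonglongrightarrow> A f w"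
  proof (rule LIMSEQ_I)
    fix r :: real assume r: "r > 0"
    have all: "\<forall>\<epsilon>>0. \<exists>M. \<forall>m\<ge>M. \<forall>f. fock_vec f \<longrightarrow> fnorm (A f - polyop (cs m) f) \<le> \<epsilon> * fnorm f"
      using cs unfolding approx_seq_def by (rule conjunct2)
    have pos: "r / (2 * (fnorm f + 1)) > 0" using r fnorm_nonneg[of f] by simp
    have "\<exists>M. \<forall>m\<ge>M. \<forall>g. fock_vec g \<longrightarrow> fnorm (A g - polyop (cs m) g) \<le> r / (2 * (fnorm f + 1)) * fnorm g"
      using mp[OF spec[OF all] pos] .
    then obtain M where M: "\<forall>m\<ge>M. \<forall>g. fock_vec g \<longrightarrow> fnorm (A g - polyop (cs m) g) \<le> r / (2 * (fnorm f + 1)) * fnorm g"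
      by (elim exE)
    have "norm (polyop (cs k) f w - A f w) < r" if "k \<ge> M" for k
    proof -
      have fd: "fock_vec (A f - polyop (cs k) f)"
        using fock_vec_diff[OF _ fock_polyop[OF f ck]] A f unfolding disc_alg_def fun_diff_def by blast
      have "norm (polyop (cs k) f w - A f w) = cmod ((A f - polyop (cs k) f) w)" by (simp add: norm_minus_commute)
      also have "\<dots> \<le> fnorm (A f - polyop (cs k) f)" by (rule fock_pt[OF fd])
      also have "\<dots> \<le> r / (2 * (fnorm f + 1)) * fnorm f" using M that f by blast
      also have "\<dots> \<le> r / 2"
      proof -
        have "fnorm f / (fnorm f + 1) \<le> 1" using fnorm_nonneg[of f] by simp
        then have "r / 2 * (fnorm f / (fnorm f + 1)) \<le> r / 2 * 1" using r by (intro mult_left_mono) auto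
        then show ?thesis by (simp add: field_simps)
      qed
      finally show ?thesis using r by simp
    qed
    then show "\<exists>no. \<forall>n\<ge>no. norm (polyop (cs n) f w - A f w) < r" by blast
  qed
  have conv3: "(\<lambda>k. polyop (cs k) f w) \<longlonglongrightarrow> (\<Sum>i\<le>length w. A e0 (take i w) * f (drop i w))"
    unfolding polyop_def by (intro tendsto_intros conv1)
  show ?thesis using LIMSEQ_unique[OF conv2 conv3] .
qed

lemma F_nonzero:
  fixes A :: "('n list \<Rightarrow> complex) \<Rightarrow> ('n list \<Rightarrow> complex)"
  assumes A: "disc_alg A" and cs: "approx_seq A cs" and ex: "\<exists>f. fock_vec f \<and> (\<exists>w. A f w \<noteq> 0)"
  shows "\<exists>u. A e0 u \<noteq> 0"
proof (rule ccontr)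
  assume "\<not> (\<exists>u. A e0 u \<noteq> 0)"
  then have z: "\<And>u. A e0 u = 0" by blast
  from ex obtain f w where f: "fock_vec f" and w: "A f w \<noteq> 0" by blast
  show False using A_formula[OF A cs f, of w] w z by simp
qed

lemma entry_bound:
  fixes M :: "'n::finite \<Rightarrow> nat \<Rightarrow> nat \<Rightarrow> complex"
  assumes row: "\<And>y. (\<Sum>j\<in>UNIV. nrm K (rowv K y (M j))) \<le> \<rho>^2 * nrm K y" and r: "\<rho> \<ge> 0"
    and q: "q \<in> {1..K}"
  shows "(\<Sum>v\<in>{v::'n list. length v = m}. (cmod (foldr (\<lambda>j X. mmul K (M j) X) v (midentity K) 1 q))^2) \<le> \<rho>^(2*m)"
proof -
  define e1 :: "nat \<Rightarrow> complex" where "e1 = (\<lambda>p. if p = 1 then 1 else 0)"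
  have K1: "1 \<in> {1..K}" using q by auto
  have r1: "rowv K e1 X q' = X 1 q'" for X q'
  proof -
    have "rowv K e1 X q' = (\<Sum>p\<in>{1..K}. if p = 1 then X 1 q' else 0)"
      unfolding rowv_def e1_def by (intro sum.cong) auto
    then show ?thesis using K1 by simp
  qed
  have n1: "nrm K e1 = 1"
  proof -
    have "nrm K e1 = (\<Sum>p\<in>{1..K}. if p = 1 then 1 else 0)"
      unfolding nrm_def e1_def by (intro sum.cong) auto
    then show ?thesis using K1 by simp
  qed
  let ?W = "\<lambda>v. foldr (\<lambda>j X. mmul K (M j) X) v (midentity K)"
  have "(cmod (?W v 1 q))^2 \<le> nrm K (rowv K e1 (?W v))" for v
  proof -
    have "(cmod (?W v 1 q))^2 = (cmod (rowv K e1 (?W v) q))^2" by (simp add: r1)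
    also have "\<dots> \<le> nrm K (rowv K e1 (?W v))"
      unfolding nrm_def by (rule member_le_sum[OF q]) auto
    finally show ?thesis .
  qed
  then have "(\<Sum>v\<in>{v::'n list. length v = m}. (cmod (?W v 1 q))^2)
      \<le> (\<Sum>v\<in>{v::'n list. length v = m}. nrm K (rowv K e1 (?W v)))"
    by (intro sum_mono)
  also have "\<dots> \<le> \<rho>^(2*m) * nrm K e1"
    by (rule words_bound[OF row r])
  finally show ?thesis using n1 by simp
qed

lemma Wg_entry_bound:
  fixes Y :: "nat \<Rightarrow> complex^'n::finite"
  assumes "b \<ge> 0" "\<mu> > 0" "\<forall>p\<in>{1..length w + 1}. norm (Y p) \<le> \<mu>" "q \<in> {1..length w + 1}"
  shows "(\<Sum>v\<in>{v::'n list. length v = m}. (cmod (Wg Y w 1 (of_real b) v 1 q))^2) \<le> (\<mu> + b)^(2*m)"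
  unfolding Wg_def
  by (rule entry_bound[OF Mg_row[OF assms(1,2,3)] _ assms(4)]) (use assms in auto)

lemma Wg_rel:
  assumes tc: "tc \<noteq> 0" and b0: "b0 \<noteq> 0" and b: "b \<noteq> 0"
  shows "tc ^ d * Wg Y w tc b v 1 (d + 1) = (b / b0) ^ d * tc ^ length v * Wg Y w 1 b0 v 1 (d + 1)"
proof -
  define l where "l = b / (tc * b0)"
  have l0: "l \<noteq> 0" using assms by (simp add: l_def)
  have lb: "l * (tc * b0) = b" using assms by (simp add: l_def)
  have "l ^ (d + 1) * Wg Y w tc (tc * b0) v 1 (d + 1) = l ^ 1 * Wg Y w tc (l * (tc * b0)) v 1 (d + 1)"
    by (rule Wg_scale)
  then have "l ^ d * Wg Y w tc (tc * b0) v 1 (d + 1) = Wg Y w tc b v 1 (d + 1)"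
    using l0 lb by (simp add: power_add mult_ac)
  moreover have "Wg Y w tc (tc * b0) v 1 (d + 1) = tc ^ length v * Wg Y w 1 b0 v 1 (d + 1)"
    using Wg_homog[of Y w tc 1 b0 v 1 "d + 1"] by simp
  ultimately have "Wg Y w tc b v 1 (d + 1) = l ^ d * tc ^ length v * Wg Y w 1 b0 v 1 (d + 1)"
    by (simp add: mult_ac)
  then have "tc ^ d * Wg Y w tc b v 1 (d + 1) = (tc * l) ^ d * tc ^ length v * Wg Y w 1 b0 v 1 (d + 1)"
    by (simp add: power_mult_distrib mult_ac)
  moreover have "tc * l = b / b0" using tc by (simp add: l_def)
  ultimately show ?thesis by simp
qed

lemma perturb:
  fixes Z :: "nat \<Rightarrow> complex^'n::finite"
  assumes I: "finite I" and eta: "\<eta> > 0"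
  shows "\<exists>Y. (\<forall>i\<in>I. norm (Y i - Z i) < \<eta>) \<and> inj_on (\<lambda>(i, j). Y i $ j) (I \<times> UNIV)"
proof -
  obtain g :: "'n \<Rightarrow> nat" and n where g: "inj_on g UNIV"
    using finite_imp_inj_to_nat_seg[of "UNIV :: 'n set"] by auto
  define P :: "nat \<Rightarrow> complex^'n" where "P i = (\<chi> j. of_nat i + \<i> * of_nat (g j))" for i
  have Pinj: "P i $ j = P i' $ j' \<Longrightarrow> i = i' \<and> j = j'" for i i' j j'
  proof -
    assume h: "P i $ j = P i' $ j'"
    then have "Re (P i $ j) = Re (P i' $ j')" "Im (P i $ j) = Im (P i' $ j')" by simp_all
    then have "i = i'" "g j = g j'" by (simp_all add: P_def)
    then show ?thesis using g by (auto simp: inj_on_def)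
  qed
  define B where "B = Max (insert 1 (norm ` P ` I))"
  have B1: "B \<ge> 1" unfolding B_def using I by simp
  have PB: "norm (P i) \<le> B" if "i \<in> I" for i
    unfolding B_def using I that by (intro Max_ge) auto
  define D where "D = I \<times> (UNIV :: 'n set)"
  have fD: "finite D" unfolding D_def using I by simp
  define bad where "bad = (\<lambda>(a, b). Re ((Z (fst b) $ snd b - Z (fst a) $ snd a) / (P (fst a) $ snd a - P (fst b) $ snd b))) ` (D \<times> D)"
  have fbad: "finite bad" unfolding bad_def using fD by simp
  have "infinite {0<..<\<eta> / B}" using eta B1 by simp
  then obtain c where c: "c \<in> {0<..<\<eta> / B}" "c \<notin> bad"
    using fbad by (metis Diff_iff finite_Diff2 finite.emptyI infinite_imp_nonempty ex_in_conv Diff_empty)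
  define Y where "Y i = Z i + c *\<^sub>R P i" for i
  have comp: "(c *\<^sub>R x) $ k = of_real c * (x $ k)" for x :: "complex^'n" and k
    by (simp only: vector_scaleR_component) (simp add: scaleR_conv_of_real)
  have "norm (Y i - Z i) < \<eta>" if "i \<in> I" for i
  proof -
    have "norm (Y i - Z i) = c * norm (P i)" using c by (simp add: Y_def)
    also have "\<dots> \<le> c * B" using c PB[OF that] by (intro mult_left_mono) auto
    also have "\<dots> < \<eta>" using c B1 by (simp add: field_simps)
    finally show ?thesis .
  qed
  moreover have "inj_on (\<lambda>(i, j). Y i $ j) (I \<times> UNIV)"
  proof (rule inj_onI, clarify)
    fix i j i' j' assume i: "i \<in> I" "i' \<in> I" and h: "Y i $ j = Y i' $ j'"
    show "i = i' \<and> j = j'"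
    proof (rule ccontr)
      assume ne: "\<not> (i = i' \<and> j = j')"
      then have Pne: "P i $ j - P i' $ j' \<noteq> 0" using Pinj by auto
      have "Z i $ j + of_real c * P i $ j = Z i' $ j' + of_real c * P i' $ j'"
        using h unfolding Y_def vector_add_component comp .
      then have "of_real c * (P i $ j - P i' $ j') = Z i' $ j' - Z i $ j"
        by (simp add: algebra_simps)
      then have "of_real c = (Z i' $ j' - Z i $ j) / (P i $ j - P i' $ j')"
        using Pne by (simp add: field_simps)
      then have "c = Re ((Z i' $ j' - Z i $ j) / (P i $ j - P i' $ j'))"
        by (metis Re_complex_of_real)
      moreover have "((i, j), (i', j')) \<in> D \<times> D" using i by (simp add: D_def)
      ultimately have "c \<in> bad" unfolding bad_def by force
      then show False using c by blast
    qed
  qed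
  ultimately show ?thesis by blast
qed

lemma powser_bound_summable:
  fixes h :: "nat \<Rightarrow> complex"
  assumes hb: "\<And>m. norm (h m) \<le> C * \<rho>0^m" and r: "0 < \<rho>0" and z: "norm z < 1 / \<rho>0"
  shows "summable (\<lambda>n. h (n + d) * z^n)" "summable (\<lambda>m. h m * z^m)"
proof -
  have q: "\<rho>0 * norm z < 1" using z r by (simp add: field_simps)
  have q0: "0 \<le> \<rho>0 * norm z" using r by simp
  have C: "C \<ge> 0" using order_trans[OF norm_ge_zero hb[of 0]] by simp
  have g: "summable (\<lambda>n. C * \<rho>0^d * (\<rho>0 * norm z)^n)"
    using q q0 by (intro summable_mult summable_geometric) auto
  show "summable (\<lambda>n. h (n + d) * z^n)"
  proof (rule summable_comparison_test'[OF g])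
    fix n
    have "norm (h (n + d) * z^n) = norm (h (n + d)) * norm z ^ n" by (simp add: norm_mult norm_power)
    also have "\<dots> \<le> C * \<rho>0^(n + d) * norm z ^ n" by (intro mult_right_mono hb) auto
    also have "\<dots> = C * \<rho>0^d * (\<rho>0 * norm z)^n" by (simp add: power_add power_mult_distrib mult_ac)
    finally show "norm (h (n + d) * z^n) \<le> C * \<rho>0^d * (\<rho>0 * norm z)^n" .
  qed
  have g2: "summable (\<lambda>n. C * (\<rho>0 * norm z)^n)"
    using q q0 by (intro summable_mult summable_geometric) auto
  show "summable (\<lambda>m. h m * z^m)"
  proof (rule summable_comparison_test'[OF g2])
    fix n
    have "norm (h n * z^n) = norm (h n) * norm z ^ n" by (simp add: norm_mult norm_power)
    also have "\<dots> \<le> C * \<rho>0^n * norm z ^ n" by (intro mult_right_mono hb) auto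
    also have "\<dots> = C * (\<rho>0 * norm z)^n" by (simp add: power_mult_distrib mult_ac)
    finally show "norm (h n * z^n) \<le> C * (\<rho>0 * norm z)^n" .
  qed
qed

lemma analytic_choice:
  fixes h :: "nat \<Rightarrow> complex"
  assumes hb: "\<And>m. norm (h m) \<le> C * \<rho>0^m" and r: "0 < \<rho>0" "\<rho>0 < 1" and h0: "h d \<noteq> 0"
    and eta: "\<eta> > 0"
  shows "\<exists>t::real. 0 < t \<and> t \<le> 1 \<and> 1 - t < \<eta> \<and> (\<Sum>n. h (n + d) * (of_real t)^n) \<noteq> 0"
proof -
  define G where "G z = (\<Sum>n. h (n + d) * z^n)" for z :: complex
  let ?S = "ball (0::complex) (1 / \<rho>0)"
  have sums: "(\<lambda>n. h (n + d) * (z - 0)^n) sums G z" if "z \<in> ?S" for z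
  proof -
    have "norm z < 1 / \<rho>0" using that by simp
    then have "summable (\<lambda>n. h (n + d) * z^n)" by (rule powser_bound_summable(1)[OF hb r(1)])
    then show ?thesis unfolding G_def by (simp add: summable_sums)
  qed
  have hol: "G holomorphic_on ?S" by (rule power_series_holomorphic[OF sums])
  have G0: "G 0 \<noteq> 0" unfolding G_def using h0 by simp
  have one: "(1::complex) \<in> ?S" using r by (simp add: field_simps)
  have zero: "(0::complex) \<in> ?S" using r by simp
  show ?thesis
  proof (cases "G 1 = 0")
    case False
    then show ?thesis using eta unfolding G_def by (intro exI[of _ 1]) auto
  next
    case True
    obtain r0 where r0: "0 < r0" and nz: "\<And>z. z \<in> ball 1 r0 - {1} \<Longrightarrow> G z \<noteq> 0"
      using isolated_zeros[OF hol open_ball convex_connected[OF convex_ball] one True zero G0] by blast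
    define s where "s = min (min (r0/2) (\<eta>/2)) (1/2)"
    have s: "0 < s" "s < r0" "s < \<eta>" "s \<le> 1/2" using r0 eta by (auto simp: s_def)
    define t where "t = 1 - s"
    have "complex_of_real t \<in> ball 1 r0 - {1}"
      using s by (auto simp: t_def dist_norm)
    then have "G (of_real t) \<noteq> 0" by (rule nz)
    then show ?thesis using s unfolding G_def t_def by (intro exI[of _ "1 - s"]) auto
  qed
qed

lemma Mg_scaled: "Mg (\<lambda>i. t *\<^sub>R Y i) w 1 b = Mg Y w (of_real t) b"
proof -
  have c: "(t *\<^sub>R x) $ k = of_real t * (x $ k)" for x :: "complex^'n" and k
    by (simp only: vector_scaleR_component) (simp add: scaleR_conv_of_real)
  show ?thesis unfolding Mg_def c mult_1_left ..
qed

lemma Wg_scaled: "Wg (\<lambda>i. t *\<^sub>R Y i) w 1 b = Wg Y w (of_real t) b"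
  unfolding Wg_def Mg_scaled ..

lemma rho_word_Wg: "rho_word Z' w \<delta> = Wg Z' w 1 (of_real (1 - \<delta>))"
proof -
  have "rho_S Z' w \<delta> = Mg Z' w 1 (of_real (1 - \<delta>))"
    unfolding rho_S_def Mg_def by (intro ext) simp
  then show ?thesis unfolding rho_word_def Wg_def by simp
qed

theorem lemma4p4:
  fixes Z :: "nat \<Rightarrow> complex^'n::finite"
    and A :: "('n list \<Rightarrow> complex) \<Rightarrow> ('n list \<Rightarrow> complex)"
    and \<epsilon> :: "nat \<Rightarrow> real"
  assumes "CARD('n) \<ge> 2"
    and "\<forall>i\<ge>1. norm (Z i) < 1"
    and "disc_alg A"
    and "\<exists>f. fock_vec f \<and> (\<exists>w. A f w \<noteq> 0)"
    and "\<forall>i\<ge>1. \<epsilon> i > 0"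
  shows "\<exists>(w :: 'n list) (Z' :: nat \<Rightarrow> complex^'n). length w \<ge> 2 \<and>
           (\<forall>i\<in>{1..length w + 1}. norm (Z' i) < 1) \<and>
           inj_on (\<lambda>(i, j). Z' i $ j) ({1..length w + 1} \<times> UNIV) \<and>
           (\<forall>i\<in>{1..length w + 1}. norm (Z' i - Z i) < \<epsilon> i) \<and>
           (\<forall>\<delta>. 0 \<le> \<delta> \<and> \<delta> < 1 \<and> (\<forall>i\<in>{1..length w + 1}. norm (Z' i) < \<delta>) \<longrightarrow>
              (\<exists>i j. rho_ext Z' w \<delta> A i j \<noteq> 0))"
proof -
  define cs where "cs = (SOME cs. approx_seq A cs)"
  have cs: "approx_seq A cs" unfolding cs_def using approx_exists[OF assms(3)] by (rule someI_ex)
  define F where "F = A e0"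
  have Ffock: "fock_vec F" using assms(3) fock_e0 unfolding disc_alg_def F_def by blast
  obtain u where u: "F u \<noteq> 0" using F_nonzero[OF assms(3) cs assms(4)] unfolding F_def by blast
  obtain j0 :: 'n where True by blast
  define w where "w = u @ [j0, j0]"
  define d where "d = length u"
  define K where "K = length w + 1"
  have Kd: "K = d + 3" by (simp add: K_def w_def d_def)
  have takew: "take d w = u" by (simp add: w_def d_def)
  define \<eta> where "\<eta> = Min ((\<lambda>i. min (\<epsilon> i / 2) ((1 - norm (Z i)) / 2)) ` {1..K})"
  have ne: "{1..K} \<noteq> {}" using Kd by simp
  have eta_pos: "\<eta> > 0"
    unfolding \<eta>_def using ne assms(2,5) by (subst Min_gr_iff) auto
  have eta_le: "\<eta> \<le> \<epsilon> i / 2" "\<eta> \<le> (1 - norm (Z i)) / 2" if "i \<in> {1..K}" for i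
  proof -
    have "\<eta> \<le> min (\<epsilon> i / 2) ((1 - norm (Z i)) / 2)" unfolding \<eta>_def using that by (intro Min_le) auto
    then show "\<eta> \<le> \<epsilon> i / 2" "\<eta> \<le> (1 - norm (Z i)) / 2" by auto
  qed
  obtain Y :: "nat \<Rightarrow> complex^'n" where Y: "\<forall>i\<in>{1..K}. norm (Y i - Z i) < \<eta>" "inj_on (\<lambda>(i, j). Y i $ j) ({1..K} \<times> UNIV)"
    using perturb[of "{1..K}" \<eta> Z] eta_pos by auto
  have Ylt: "norm (Y i) < 1" if i: "i \<in> {1..K}" for i
  proof -
    have "norm (Y i) \<le> norm (Z i) + norm (Y i - Z i)" by (metis norm_triangle_sub add.commute)
    moreover have "norm (Z i) < 1" using assms(2) i by auto
    ultimately show ?thesis using Y(1) i eta_le(2)[OF i] by fastforce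
  qed
  define \<mu>Y where "\<mu>Y = Max (norm ` Y ` {1..K})"
  have muY: "\<mu>Y < 1" "\<forall>p\<in>{1..K}. norm (Y p) \<le> \<mu>Y" "\<mu>Y \<ge> 0"
  proof -
    show "\<mu>Y < 1" unfolding \<mu>Y_def using ne Ylt by (subst Max_less_iff) auto
    show "\<forall>p\<in>{1..K}. norm (Y p) \<le> \<mu>Y" unfolding \<mu>Y_def by (auto intro: Max_ge)
    then show "\<mu>Y \<ge> 0" using ne by (meson all_not_in_conv norm_ge_zero order_trans)
  qed
  define \<mu>1 where "\<mu>1 = (\<mu>Y + 1) / 2"
  define \<beta>0 where "\<beta>0 = (1 - \<mu>1) / 2"
  define \<rho>0 where "\<rho>0 = \<mu>1 + \<beta>0"
  have mu1: "\<mu>1 > 0" "\<mu>1 < 1" "\<forall>p\<in>{1..K}. norm (Y p) \<le> \<mu>1"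
    using muY unfolding \<mu>1_def by (auto intro: order_trans)
  have b0: "\<beta>0 > 0" using mu1 by (simp add: \<beta>0_def)
  have r0: "0 < \<rho>0" "\<rho>0 < 1" using mu1(1,2) unfolding \<rho>0_def \<beta>0_def by (simp_all add: field_simps)
  define H where "H v = Wg Y w 1 (of_real \<beta>0) v 1 (d + 1)" for v
  have dK: "d + 1 \<in> {1..length w + 1}" by (simp add: w_def d_def)
  have Hb: "(\<Sum>v\<in>{v::'n list. length v = m}. (cmod (H v))^2) \<le> \<rho>0^(2*m)" for m
    unfolding H_def \<rho>0_def
    by (rule Wg_entry_bound) (use b0 mu1 dK in \<open>auto simp: K_def\<close>)
  define h where "h m = Sm H F m" for m
  have hb: "norm (h m) \<le> fnorm F * \<rho>0^m" for m
    unfolding h_def by (rule Sm_bound[OF Ffock Hb]) (use r0 in auto)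
  have hz: "h m = 0" if "m < d" for m
    unfolding h_def Sm_def H_def using that by (intro sum.neutral) (auto intro!: Wg_band)
  have hd: "h d = F u * of_real \<beta>0 ^ d"
  proof -
    have "H v = (if v = u then of_real \<beta>0 ^ d else 0)" if "length v = d" for v
      using Wg_exact[of 1 v w Y 1 "of_real \<beta>0"] that takew
      by (simp add: H_def w_def d_def add.commute)
    then have "h d = (\<Sum>v\<in>{v::'n list. length v = d}. if v = u then F u * of_real \<beta>0 ^ d else 0)"
      unfolding h_def Sm_def by (intro sum.cong) auto
    also have "\<dots> = F u * of_real \<beta>0 ^ d" using finite_words[where 'a='n and m=d] by (simp add: d_def)
    finally show ?thesis .
  qed
  have hd0: "h d \<noteq> 0" using hd u b0 by simp
  obtain t where t: "0 < t" "t \<le> 1" "1 - t < \<eta>" "(\<Sum>n. h (n + d) * (of_real t)^n) \<noteq> 0"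
    using analytic_choice[OF hb r0 hd0 eta_pos] by blast
  define Z' where "Z' i = t *\<^sub>R Y i" for i
  show ?thesis
  proof (intro exI[of _ w] exI[of _ Z'] conjI)
    show "length w \<ge> 2" by (simp add: w_def)
    show "\<forall>i\<in>{1..length w + 1}. norm (Z' i) < 1"
    proof
      fix i assume i: "i \<in> {1..length w + 1}"
      have "norm (Z' i) = t * norm (Y i)" using t by (simp add: Z'_def)
      also have "\<dots> \<le> norm (Y i)" using t by (simp add: mult_left_le_one_le)
      also have "\<dots> < 1" using Ylt i by (simp add: K_def)
      finally show "norm (Z' i) < 1" .
    qed
    show "inj_on (\<lambda>(i, j). Z' i $ j) ({1..length w + 1} \<times> UNIV)"
    proof (rule inj_onI, clarify)
      fix i j i' j' assume i: "i \<in> {1..length w + 1}" "i' \<in> {1..length w + 1}" and h: "Z' i $ j = Z' i' $ j'"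
      then have "Y i $ j = Y i' $ j'" using t by (simp add: Z'_def)
      then have "(i, j) = (i', j')" using inj_onD[OF Y(2), of "(i, j)" "(i', j')"] i by (simp add: K_def)
      then show "i = i' \<and> j = j'" by simp
    qed
    show "\<forall>i\<in>{1..length w + 1}. norm (Z' i - Z i) < \<epsilon> i"
    proof
      fix i assume i0: "i \<in> {1..length w + 1}"
      then have i: "i \<in> {1..K}" by (simp add: K_def)
      have "norm (Z' i - Z i) \<le> norm (Z' i - Y i) + norm (Y i - Z i)"
        using norm_triangle_ineq[of "Z' i - Y i" "Y i - Z i"] by simp
      moreover have "norm (Z' i - Y i) < \<eta>"
      proof -
        have "Z' i - Y i = (t - 1) *\<^sub>R Y i" by (simp add: Z'_def algebra_simps)
        then have "norm (Z' i - Y i) = (1 - t) * norm (Y i)" using t by simp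
        also have "\<dots> \<le> 1 - t" using t Ylt[OF i] by (simp add: mult_left_le)
        finally show ?thesis using t(3) by linarith
      qed
      moreover have "norm (Y i - Z i) < \<eta>" using Y(1) i by blast
      moreover have "\<eta> \<le> \<epsilon> i / 2" by (rule eta_le(1)[OF i])
      ultimately show "norm (Z' i - Z i) < \<epsilon> i" using t(3) by linarith
    qed
    show "\<forall>\<delta>. 0 \<le> \<delta> \<and> \<delta> < 1 \<and> (\<forall>i\<in>{1..length w + 1}. norm (Z' i) < \<delta>) \<longrightarrow>
              (\<exists>i j. rho_ext Z' w \<delta> A i j \<noteq> 0)"
    proof (intro allI impI)
      fix \<delta> :: real
      assume \<delta>: "0 \<le> \<delta> \<and> \<delta> < 1 \<and> (\<forall>i\<in>{1..length w + 1}. norm (Z' i) < \<delta>)"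
      define \<mu>d where "\<mu>d = Max (norm ` Z' ` {1..K})"
      have mud: "\<mu>d < \<delta>" "\<forall>p\<in>{1..K}. norm (Z' p) \<le> \<mu>d" "\<mu>d \<ge> 0"
      proof -
        show "\<mu>d < \<delta>" unfolding \<mu>d_def using ne \<delta> by (subst Max_less_iff) (auto simp: K_def)
        show "\<forall>p\<in>{1..K}. norm (Z' p) \<le> \<mu>d" unfolding \<mu>d_def by (auto intro: Max_ge)
        then show "\<mu>d \<ge> 0" using ne by (meson all_not_in_conv norm_ge_zero order_trans)
      qed
      define \<mu>2 where "\<mu>2 = (\<mu>d + \<delta>) / 2"
      have mu2: "\<mu>2 > 0" "\<mu>2 < \<delta>" "\<forall>p\<in>{1..length w + 1}. norm (Z' p) \<le> \<mu>2"
        using mud \<delta> unfolding \<mu>2_def K_def by (auto intro: order_trans)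
      define \<rho> where "\<rho> = \<mu>2 + (1 - \<delta>)"
      have r: "0 \<le> \<rho>" "\<rho> < 1" using mu2 \<delta> unfolding \<rho>_def by auto
      define e where "e v = rho_word Z' w \<delta> v 1 (d + 1)" for v
      have eb: "(\<Sum>v\<in>{v::'n list. length v = m}. (cmod (e v))^2) \<le> \<rho>^(2*m)" for m
        unfolding e_def rho_word_Wg \<rho>_def
        by (rule Wg_entry_bound) (use mu2 \<delta> dK in auto)
      have lim: "rho_ext Z' w \<delta> A 1 (d + 1) = Lfun e F"
      proof -
        have "(\<lambda>k. rho_poly Z' w \<delta> (cs k) 1 (d + 1)) \<longlonglongrightarrow> Lfun e (A e0)"
          unfolding rho_poly_def e_def[symmetric] by (rule Lfun_limit[OF eb r assms(3) cs])
        then show ?thesis unfolding rho_ext_def cs_def[symmetric] F_def by (rule limI)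
      qed
      let ?tc = "complex_of_real t"
      let ?bb = "complex_of_real (1 - \<delta>)"
      let ?bz = "complex_of_real \<beta>0"
      have tc0: "?tc \<noteq> 0" using t by simp
      have bn0: "?bb \<noteq> 0" using \<delta> by simp
      have b00: "?bz \<noteq> 0" using b0 by simp
      have rel: "?tc ^ d * e v = (?bb / ?bz) ^ d * (?tc ^ length v * H v)" for v
      proof -
        have "e v = Wg Y w ?tc ?bb v 1 (d + 1)"
          unfolding e_def rho_word_Wg Z'_def Wg_scaled ..
        then show ?thesis using Wg_rel[OF tc0 b00 bn0, of d Y w v] by (simp add: H_def mult_ac)
      qed
      have Sm_rel: "?tc ^ d * Sm e F m = (?bb / ?bz) ^ d * (h m * ?tc ^ m)" for m
      proof -
        have "?tc ^ d * Sm e F m = (\<Sum>v\<in>{v. length v = m}. F v * (?tc ^ d * e v))"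
          unfolding Sm_def sum_distrib_left by (intro sum.cong) (auto simp: mult_ac)
        also have "\<dots> = (\<Sum>v\<in>{v. length v = m}. (?bb / ?bz) ^ d * (?tc ^ m * (F v * H v)))"
        proof (rule sum.cong[OF refl])
          fix v :: "'n list" assume "v \<in> {v. length v = m}"
          then show "F v * (?tc ^ d * e v) = (?bb / ?bz) ^ d * (?tc ^ m * (F v * H v))"
            unfolding rel by (simp add: mult_ac)
        qed
        also have "\<dots> = (?bb / ?bz) ^ d * (h m * ?tc ^ m)"
          unfolding h_def Sm_def sum_distrib_left sum_distrib_right by (simp add: mult_ac)
        finally show ?thesis .
      qed
      have tcn: "norm ?tc < 1 / \<rho>0"
      proof -
        have "\<rho>0 * t \<le> \<rho>0 * 1" using t r0 by (intro mult_left_mono) auto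
        then have "\<rho>0 * t < 1" using r0 by linarith
        then show ?thesis using t r0 by (simp add: field_simps)
      qed
      have s1: "summable (\<lambda>m. h m * ?tc ^ m)" by (rule powser_bound_summable(2)[OF hb r0(1) tcn])
      have s2: "summable (\<lambda>n. h (n + d) * ?tc ^ n)" by (rule powser_bound_summable(1)[OF hb r0(1) tcn])
      have s3: "summable (Sm e F)" by (rule Sm_summable(1)[OF Ffock eb r])
      have "?tc ^ d * Lfun e F = (\<Sum>m. ?tc ^ d * Sm e F m)"
        unfolding Lfun_def by (rule suminf_mult[OF s3, symmetric])
      also have "\<dots> = (\<Sum>m. (?bb / ?bz) ^ d * (h m * ?tc ^ m))" by (simp only: Sm_rel)
      also have "\<dots> = (?bb / ?bz) ^ d * (\<Sum>m. h m * ?tc ^ m)" by (rule suminf_mult[OF s1])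
      also have "(\<Sum>m. h m * ?tc ^ m) = (\<Sum>n. h (n + d) * ?tc ^ (n + d)) + (\<Sum>i<d. h i * ?tc ^ i)"
        by (rule suminf_split_initial_segment[OF s1])
      also have "(\<Sum>i<d. h i * ?tc ^ i) = 0" using hz by (intro sum.neutral) auto
      also have "(\<Sum>n. h (n + d) * ?tc ^ (n + d)) = (\<Sum>n. ?tc ^ d * (h (n + d) * ?tc ^ n))"
        by (simp add: power_add mult_ac)
      also have "\<dots> = ?tc ^ d * (\<Sum>n. h (n + d) * ?tc ^ n)" by (rule suminf_mult[OF s2])
      finally have "?tc ^ d * Lfun e F = ?tc ^ d * ((?bb / ?bz) ^ d * (\<Sum>n. h (n + d) * ?tc ^ n))"
        by (simp add: mult_ac)
      then have "Lfun e F = (?bb / ?bz) ^ d * (\<Sum>n. h (n + d) * ?tc ^ n)" using tc0 by simp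
      then have "Lfun e F \<noteq> 0" using t(4) bn0 b00 by simp
      then have "rho_ext Z' w \<delta> A 1 (d + 1) \<noteq> 0" using lim by simp
      then show "\<exists>i j. rho_ext Z' w \<delta> A i j \<noteq> 0" by (intro exI)
    qed
  qed
qed

end
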